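(* Let $e_1 < e_2 < \cdots < e_d$ and $n$ be positive integers. Let $P$ be the polytope \[P=\mathrm{conv}\, \{ (x^{e_1},x^{e_2},\ldots,x^{e_d}) \mid x=i/n, \ i=0,1,2,\ldots,n \} \] and let $C$ be the convex hull of the curve \[ \{ (x^{e_1},x^{e_2},\ldots,x^{e_d}) \mid 0\leq x \leq 1\}. \] Then \[0\leq \mathrm{Vol}(C) - \mathrm{Vol}(P) \leq \frac{k_d}{n} (e_1+e_2+\cdots+e_d),\] where $k_d$ is a constant depending only on the dimension $d$ and $\mathrm{Vol}$ is $d$-dimensional Lebesgue measure. *)

theory Defs
  imports "HOL-Analysis.Analysis"
begin

definition power_curve :: "('d::finite \<Rightarrow> nat) \<Rightarrow> real \<Rightarrow> real ^ 'd" where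
  "power_curve e x = (\<chi> i. x ^ e i)"

end

theory Submission
  imports Defs
begin

lemma trans_out:
  fixes M :: "(real^'d::finite) set"
  assumes "convex M" "y \<in> M" "y + v \<notin> M" "1 \<le> k"
  shows "y + real k *\<^sub>R v \<notin> M"
proof
  assume h: "y + real k *\<^sub>R v \<in> M"
  have k0: "real k > 0" using assms(4) by simp
  have "(1 - 1/real k) *\<^sub>R y + (1/real k) *\<^sub>R (y + real k *\<^sub>R v) \<in> M"
    using convexD[OF assms(1) assms(2) h, of "1 - 1/real k" "1/real k"] assms(4) by simp
  moreover have "(1 - 1/real k) *\<^sub>R y + (1/real k) *\<^sub>R (y + real k *\<^sub>R v) = y + v"
    using k0 by (simp add: algebra_simps)
  ultimately show False using assms(3) by simp
qed

lemma floor_half: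
  fixes x :: real assumes "1 \<le> x" shows "x/2 \<le> of_int \<lfloor>x\<rfloor>"
proof (cases "x < 2")
  case True
  have "1 \<le> \<lfloor>x\<rfloor>" using assms by simp
  then have "(1::real) \<le> of_int \<lfloor>x\<rfloor>" by simp
  then show ?thesis using True by linarith
next
  case False
  have "x < of_int \<lfloor>x\<rfloor> + 1" using floor_le_iff[of x "\<lfloor>x\<rfloor>"] by simp
  then show ?thesis using False by linarith
qed

lemma volS:
  fixes M :: "(real^'d::finite) set"
  assumes "compact M" "convex M" "M \<subseteq> cbox (vec (-1)) (vec 2)"
    and "\<forall>i. \<bar>v$i\<bar> \<le> a" "0 \<le> a" "a \<le> 1"
  shows "measure lebesgue {y\<in>M. y + v \<notin> M} \<le> 2 * a * measure lebesgue (cbox (vec (-2)) (vec 3) :: (real^'d) set)"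
proof (cases "a = 0")
  case True
  then have "v = 0" using assms(4) by (simp add: vec_eq_iff)
  then show ?thesis using assms(5) by (simp add: mult_nonneg_nonneg)
next
  case False
  then have a0: "a > 0" using assms by simp
  define S where "S = {y\<in>M. y + v \<notin> M}"
  define R where "R = (cbox (vec (-2)) (vec 3) :: (real^'d) set)"
  define N where "N = nat \<lfloor>1/a\<rfloor>"
  have S_eq: "S = M - (\<lambda>y. y - v) ` M"
    unfolding S_def by (force simp: image_iff)
  have Sm: "S \<in> lmeasurable"
    unfolding S_eq
    by (intro fmeasurable_Diff lmeasurable_compact assms(1) fmeasurableD compact_continuous_image continuous_intros)
  define T where "T k = (+) (real k *\<^sub>R v) ` S" for k
  have Tm: "T k \<in> lmeasurable" for k unfolding T_def by (rule measurable_translation[OF Sm])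
  have Tmeas: "measure lebesgue (T k) = measure lebesgue S" for k unfolding T_def by (rule measure_translation)
  have disj: "disjoint_family_on T {..<N}"
  proof -
    have *: "T k \<inter> T l = {}" if "k < l" for k l
    proof (rule ccontr)
      assume "T k \<inter> T l \<noteq> {}"
      then obtain y y' where y: "y \<in> S" "y' \<in> S" and eq: "real k *\<^sub>R v + y = real l *\<^sub>R v + y'"
        unfolding T_def by auto
      have "y = y' + real (l - k) *\<^sub>R v"
        using eq that by (simp add: of_nat_diff algebra_simps)
      moreover have "y' + real (l - k) *\<^sub>R v \<notin> M"
        using trans_out[OF assms(2), of y' v "l-k"] y that unfolding S_def by auto
      ultimately show False using y unfolding S_def by auto
    qed
    show ?thesis unfolding disjoint_family_on_def
      by (metis * inf_commute nat_neq_iff)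
  qed
  have Na: "real k * a \<le> 1" if "k < N" for k
  proof -
    have "int k < \<lfloor>1/a\<rfloor>" using that unfolding N_def by linarith
    then have "real k + 1 \<le> 1/a" by (simp add: less_floor_iff)
    then have "real k \<le> 1/a" by linarith
    then show ?thesis using a0 by (simp add: field_simps)
  qed
  have sub: "(\<Union>k\<in>{..<N}. T k) \<subseteq> R"
  proof
    fix z assume "z \<in> (\<Union>k\<in>{..<N}. T k)"
    then obtain k y where k: "k < N" and y: "y \<in> S" and z: "z = real k *\<^sub>R v + y"
      unfolding T_def by auto
    have yM: "y \<in> cbox (vec (-1)) (vec 2)" using y assms(3) unfolding S_def by auto
    show "z \<in> R" unfolding R_def mem_box_cart
    proof
      fix i
      have "\<bar>real k * v$i\<bar> \<le> real k * a"
        using assms(4) by (simp add: abs_mult mult_left_mono)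
      then have "\<bar>real k * v$i\<bar> \<le> 1" using Na[OF k] by linarith
      then show "vec (- 2) $ i \<le> z $ i \<and> z $ i \<le> vec 3 $ i"
      proof -
        have c: "z $ i = real k * v$i + y$i" unfolding z by simp
        have "-1 \<le> y$i \<and> y$i \<le> 2" using yM by (simp add: mem_box_cart)
        then show ?thesis using c \<open>\<bar>real k * v$i\<bar> \<le> 1\<close> by (simp add: abs_le_iff)
      qed
    qed
  qed
  have "measure lebesgue (\<Union>k\<in>{..<N}. T k) = (\<Sum>k<N. measure lebesgue (T k))"
  proof (rule measure_finite_Union)
    show "\<And>i. i \<in> {..<N} \<Longrightarrow> emeasure lebesgue (T i) \<noteq> \<infinity>"
      using fmeasurableD2[OF Tm] unfolding infinity_ennreal_def by blast
    show "finite {..<N}" by simp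
    show "T ` {..<N} \<subseteq> sets lebesgue" using fmeasurableD[OF Tm] by blast
    show "disjoint_family_on T {..<N}" by (rule disj)
  qed
  also have "\<dots> = real N * measure lebesgue S" by (simp only: Tmeas sum_constant card_lessThan)
  finally have eqU: "measure lebesgue (\<Union>k\<in>{..<N}. T k) = real N * measure lebesgue S" .
  have U: "(\<Union>k\<in>{..<N}. T k) \<in> sets lebesgue"
    by (intro sets.finite_UN finite_lessThan fmeasurableD[OF Tm])
  have Rm: "R \<in> lmeasurable" unfolding R_def by (rule lmeasurable_cbox)
  have "real N * measure lebesgue S \<le> measure lebesgue R"
    using measure_mono_fmeasurable[OF sub U Rm] unfolding eqU .
  moreover have "1 \<le> real N * (2 * a)"
  proof -
    have x1: "1/a \<ge> 1" using a0 assms(6) by (simp add: field_simps)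
    have f0: "0 \<le> \<lfloor>1/a\<rfloor>" using a0 by simp
    have "real N = of_int \<lfloor>1/a\<rfloor>" unfolding N_def using f0 by (metis of_int_of_nat_eq nat_0_le)
    moreover have "of_int \<lfloor>1/a\<rfloor> \<ge> (1/a) / 2" by (rule floor_half[OF x1])
    ultimately show ?thesis using a0 by (simp add: field_simps)
  qed
  moreover have "measure lebesgue S \<ge> 0" by (rule measure_nonneg)
  moreover have "measure lebesgue R \<ge> 0" by (rule measure_nonneg)
  ultimately have "measure lebesgue S \<le> 2 * a * measure lebesgue R"
  proof -
    assume h1: "real N * measure lebesgue S \<le> measure lebesgue R" and h2: "1 \<le> real N * (2 * a)"
      and h3: "measure lebesgue S \<ge> 0"
    have "measure lebesgue S \<le> measure lebesgue S * (real N * (2 * a))"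
      using mult_left_mono[OF h2 h3] by (simp only: mult_1_right)
    also have "\<dots> = (real N * measure lebesgue S) * (2 * a)" by (simp only: mult_ac)
    also have "\<dots> \<le> measure lebesgue R * (2 * a)" using h1 a0 by (intro mult_right_mono) auto
    finally show ?thesis by (simp only: mult_ac)
  qed
  then show ?thesis unfolding S_def R_def .
qed

definition boxB :: "('d::finite \<Rightarrow> real) \<Rightarrow> 'd set \<Rightarrow> (real^'d) set" where
  "boxB a J = {w. \<forall>i. \<bar>w$i\<bar> \<le> (if i \<in> J then a i else 0)}"

definition KK :: "(real^'d::finite) set \<Rightarrow> ('d \<Rightarrow> real) \<Rightarrow> 'd set \<Rightarrow> (real^'d) set" where
  "KK P a J = {x + y | x y. x \<in> P \<and> y \<in> boxB a J}"

lemma boxB_cbox: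
  assumes "\<forall>i. 0 \<le> a i"
  shows "boxB a J = cbox (\<chi> i. -(if i \<in> J then a i else 0)) (\<chi> i. if i \<in> J then a i else 0)"
proof -
  have e: "\<bar>x\<bar> \<le> c \<longleftrightarrow> -c \<le> x \<and> x \<le> c" for x c :: real by auto
  show ?thesis unfolding boxB_def by (rule set_eqI) (simp add: mem_box_cart e)
qed

lemma KK_compact: "compact P \<Longrightarrow> \<forall>i. 0 \<le> a i \<Longrightarrow> compact (KK P a J)"
  unfolding KK_def by (rule compact_sums) (auto simp: boxB_cbox)

lemma KK_convex: 
  assumes "convex P" "\<forall>i. 0 \<le> a i" shows "convex (KK P a J)"
proof -
  have "KK P a J = (\<Union>x\<in>P. \<Union>y\<in>boxB a J. {x+y})" by (auto simp: KK_def)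
  moreover have "convex (boxB a J)" using assms(2) by (simp add: boxB_cbox convex_box)
  ultimately show ?thesis using convex_sums[OF assms(1)] by simp
qed

lemma KK_sub:
  assumes "P \<subseteq> cbox (vec 0) (vec 1)" "\<forall>i. 0 \<le> a i \<and> a i \<le> 1"
  shows "KK P a J \<subseteq> cbox (vec (-1)) (vec 2)"
proof
  fix z assume "z \<in> KK P a J"
  then obtain x y where z: "z = x + y" and x: "x \<in> P" and y: "y \<in> boxB a J" unfolding KK_def by auto
  show "z \<in> cbox (vec (-1)) (vec 2)" unfolding mem_box_cart
  proof
    fix i
    have "0 \<le> x$i \<and> x$i \<le> 1" using x assms(1) by (auto simp: mem_box_cart)
    moreover have "\<bar>y$i\<bar> \<le> 1"
    proof -
      have "\<bar>y$i\<bar> \<le> (if i \<in> J then a i else 0)" using y unfolding boxB_def by blast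
      moreover have "(if i \<in> J then a i else 0) \<le> 1" using assms(2) by simp
      ultimately show ?thesis by linarith
    qed
    ultimately show "vec (-1) $ i \<le> z $ i \<and> z $ i \<le> vec 2 $ i" unfolding z by (simp add: abs_le_iff)
  qed
qed

lemma KK_empty: "KK P a {} = P"
proof -
  have "boxB a {} = {0}" unfolding boxB_def by (auto simp: vec_eq_iff)
  then show ?thesis unfolding KK_def by auto
qed

lemma KK_step:
  assumes cP: "convex P" and a: "\<forall>i. 0 \<le> a i" and j: "j \<notin> J"
  defines "M \<equiv> KK P a (insert j J)" and "v \<equiv> (\<chi> i. if i = j then a j else 0) :: real^'d"
  shows "M \<subseteq> KK P a J \<union> {y\<in>M. y + v \<notin> M} \<union> {y\<in>M. y + (-v) \<notin> M}"
proof
  fix y assume yM: "y \<in> M"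
  show "y \<in> KK P a J \<union> {y\<in>M. y + v \<notin> M} \<union> {y\<in>M. y + (-v) \<notin> M}"
  proof (rule ccontr)
    assume "\<not> ?thesis"
    then have nK: "y \<notin> KK P a J" and p: "y + v \<in> M" and m: "y + (-v) \<in> M" using yM by blast+
    define u :: "real^'d" where "u = (\<chi> i. if i = j then 1 else 0)"
    have gen: "\<exists>s. y + s *\<^sub>R u \<in> KK P a J \<and> (0 \<le> t \<longrightarrow> 0 \<le> s) \<and> (t \<le> 0 \<longrightarrow> s \<le> 0)"
      if t: "\<bar>t\<bar> = a j" and h: "y + t *\<^sub>R u \<in> M" for t
    proof -
      obtain p w where eq: "y + t *\<^sub>R u = p + w" and pP: "p \<in> P" and w: "w \<in> boxB a (insert j J)"
        using h unfolding M_def KK_def by blast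
      define z :: "real^'d" where "z = (\<chi> i. if i = j then 0 else w$i)"
      have wb: "\<bar>w$i\<bar> \<le> (if i \<in> insert j J then a i else 0)" for i using w unfolding boxB_def by blast
      have zB: "z \<in> boxB a J" unfolding boxB_def z_def
      proof (intro CollectI allI)
        fix i show "\<bar>(\<chi> i. if i = j then 0 else w$i)$i\<bar> \<le> (if i \<in> J then a i else 0)"
          using wb[of i] j a by (cases "i = j") auto
      qed
      have wj: "\<bar>w$j\<bar> \<le> a j" using wb[of j] by simp
      have eqi: "y$i + t * u$i = p$i + w$i" for i
        using arg_cong[OF eq, of "\<lambda>x. x$i"] by simp
      have pz: "p + z = y + (t - w$j) *\<^sub>R u"
        unfolding vec_eq_iff
      proof
        fix i show "(p + z) $ i = (y + (t - w $ j) *\<^sub>R u) $ i"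
        proof (cases "i = j")
          case True
          then show ?thesis using eqi[of i] by (simp add: u_def z_def algebra_simps)
        next
          case False
          then show ?thesis using eqi[of i] by (simp add: u_def z_def)
        qed
      qed
      have inK: "p + z \<in> KK P a J" using pP zB unfolding KK_def by blast
      show ?thesis
      proof (intro exI[of _ "t - w$j"] conjI)
        show "y + (t - w$j) *\<^sub>R u \<in> KK P a J" using inK pz by simp
        show "0 \<le> t \<longrightarrow> 0 \<le> t - w$j" using t wj by arith
        show "t \<le> 0 \<longrightarrow> t - w$j \<le> 0" using t wj by arith
      qed
    qed
    have vu: "v = a j *\<^sub>R u" unfolding v_def u_def by (auto simp: vec_eq_iff)
    obtain s1 where s1: "y + s1 *\<^sub>R u \<in> KK P a J" "0 \<le> s1"
      using gen[of "a j"] p a vu by auto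
    obtain s2 where s2: "y + s2 *\<^sub>R u \<in> KK P a J" "s2 \<le> 0"
      using gen[of "- a j"] m a vu by auto
    have "s1 \<noteq> 0" using s1 nK by auto
    moreover have "s2 \<noteq> 0" using s2 nK by auto
    ultimately have d: "s1 - s2 > 0" using s1 s2 by linarith
    have "(-s2/(s1-s2)) *\<^sub>R (y + s1 *\<^sub>R u) + (s1/(s1-s2)) *\<^sub>R (y + s2 *\<^sub>R u) \<in> KK P a J"
    proof (rule convexD[OF KK_convex[OF cP a] s1(1) s2(1)])
      show "0 \<le> - s2 / (s1 - s2)" using d s2(2) by (intro divide_nonneg_pos) auto
      show "0 \<le> s1 / (s1 - s2)" using d s1 by simp
      show "- s2 / (s1 - s2) + s1 / (s1 - s2) = 1" using d by (simp add: divide_simps)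
    qed
    moreover have "(-s2/(s1-s2)) *\<^sub>R (y + s1 *\<^sub>R u) + (s1/(s1-s2)) *\<^sub>R (y + s2 *\<^sub>R u) = y"
    proof -
      have nz: "s1 - s2 \<noteq> 0" using d by simp
      have "-s2/(s1-s2) + s1/(s1-s2) = (-s2 + s1)/(s1-s2)" by (rule add_divide_distrib[symmetric])
      also have "\<dots> = 1" using nz by simp
      finally have e1: "-s2/(s1-s2) + s1/(s1-s2) = 1" .
      have "(-s2/(s1-s2)) * s1 + (s1/(s1-s2)) * s2 = (-s2 * s1 + s1 * s2)/(s1-s2)"
        by (simp only: times_divide_eq_left add_divide_distrib)
      also have "\<dots> = 0" by simp
      finally have e2: "(-s2/(s1-s2)) * s1 + (s1/(s1-s2)) * s2 = 0" .
      have "(-s2/(s1-s2)) *\<^sub>R (y + s1 *\<^sub>R u) + (s1/(s1-s2)) *\<^sub>R (y + s2 *\<^sub>R u)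
           = (-s2/(s1-s2) + s1/(s1-s2)) *\<^sub>R y + ((-s2/(s1-s2)) * s1 + (s1/(s1-s2)) * s2) *\<^sub>R u"
        by (simp add: algebra_simps)
      then show ?thesis using e1 e2 by simp
    qed
    ultimately show False using nK by simp
  qed
qed

lemma Sset_lmeas:
  fixes M :: "(real^'d::finite) set"
  assumes "compact M" shows "{y\<in>M. y + v \<notin> M} \<in> lmeasurable"
proof -
  have S_eq: "{y\<in>M. y + v \<notin> M} = M - (\<lambda>y. y - v) ` M" by (force simp: image_iff)
  show ?thesis unfolding S_eq
    by (intro fmeasurable_Diff lmeasurable_compact assms(1) fmeasurableD compact_continuous_image continuous_intros)
qed

lemma KK_meas:
  fixes P :: "(real^'d::finite) set"
  assumes cP: "convex P" "compact P" "P \<subseteq> cbox (vec 0) (vec 1)"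
    and a: "\<forall>i. 0 \<le> a i \<and> a i \<le> 1" and j: "j \<notin> J"
  shows "measure lebesgue (KK P a (insert j J)) \<le> measure lebesgue (KK P a J)
           + 4 * a j * measure lebesgue (cbox (vec (-2)) (vec 3) :: (real^'d) set)"
proof -
  define M where "M = KK P a (insert j J)"
  define v :: "real^'d" where "v = (\<chi> i. if i = j then a j else 0)"
  define R where "R = (cbox (vec (-2)) (vec 3) :: (real^'d) set)"
  define K where "K = KK P a J"
  define S1 where "S1 = {y\<in>M. y + v \<notin> M}"
  define S2 where "S2 = {y\<in>M. y + (-v) \<notin> M}"
  have a0: "\<forall>i. 0 \<le> a i" using a by blast
  have sub: "M \<subseteq> K \<union> S1 \<union> S2"
    unfolding M_def K_def S1_def S2_def v_def by (rule KK_step[OF cP(1) a0 j])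
  have Mc: "compact M" unfolding M_def by (rule KK_compact[OF cP(2) a0])
  have Mv: "convex M" unfolding M_def by (rule KK_convex[OF cP(1) a0])
  have Mb: "M \<subseteq> cbox (vec (-1)) (vec 2)" unfolding M_def by (rule KK_sub[OF cP(3) a])
  have Km: "K \<in> lmeasurable" unfolding K_def by (rule lmeasurable_compact[OF KK_compact[OF cP(2) a0]])
  have S1m: "S1 \<in> lmeasurable" unfolding S1_def by (rule Sset_lmeas[OF Mc])
  have S2m: "S2 \<in> lmeasurable" unfolding S2_def by (rule Sset_lmeas[OF Mc])
  have vb: "\<forall>i. \<bar>v$i\<bar> \<le> a j" unfolding v_def using a by simp
  have vb2: "\<forall>i. \<bar>(-v)$i\<bar> \<le> a j" using vb by simp
  have aj: "0 \<le> a j" "a j \<le> 1" using a by auto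
  have b1: "measure lebesgue S1 \<le> 2 * a j * measure lebesgue R"
    unfolding S1_def R_def by (rule volS[OF Mc Mv Mb vb aj])
  have b2: "measure lebesgue S2 \<le> 2 * a j * measure lebesgue R"
    unfolding S2_def R_def by (rule volS[OF Mc Mv Mb vb2 aj])
  have Um: "K \<union> S1 \<union> S2 \<in> lmeasurable" by (intro fmeasurable.Un Km S1m S2m)
  have "measure lebesgue M \<le> measure lebesgue (K \<union> S1 \<union> S2)"
    by (rule measure_mono_fmeasurable[OF sub fmeasurableD[OF lmeasurable_compact[OF Mc]] Um])
  also have "\<dots> \<le> measure lebesgue (K \<union> S1) + measure lebesgue S2"
    by (intro measure_Un_le fmeasurableD fmeasurable.Un Km S1m S2m)
  also have "\<dots> \<le> measure lebesgue K + measure lebesgue S1 + measure lebesgue S2"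
    using measure_Un_le[OF fmeasurableD[OF Km] fmeasurableD[OF S1m]] by linarith
  finally show ?thesis using b1 b2 unfolding M_def K_def R_def by linarith
qed

lemma KK_ind:
  fixes P :: "(real^'d::finite) set"
  assumes cP: "convex P" "compact P" "P \<subseteq> cbox (vec 0) (vec 1)"
    and a: "\<forall>i. 0 \<le> a i \<and> a i \<le> 1" and J: "finite J"
  shows "measure lebesgue (KK P a J) \<le> measure lebesgue P
           + 4 * measure lebesgue (cbox (vec (-2)) (vec 3) :: (real^'d) set) * (\<Sum>j\<in>J. a j)"
  using J
proof (induction J rule: finite_induct)
  case empty
  then show ?case by (simp add: KK_empty)
next
  case (insert j J)
  have "measure lebesgue (KK P a (insert j J)) \<le> measure lebesgue (KK P a J)
           + 4 * a j * measure lebesgue (cbox (vec (-2)) (vec 3) :: (real^'d) set)"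
    by (rule KK_meas[OF cP a insert(2)])
  then show ?case using insert(1,2,3) by (simp add: algebra_simps)
qed

lemma pow_diff_le:
  fixes g x :: real
  assumes "0 \<le> g" "g \<le> x" "x \<le> 1"
  shows "0 \<le> x^m - g^m \<and> x^m - g^m \<le> real m * (x - g)"
proof (induction m)
  case 0
  then show ?case by simp
next
  case (Suc m)
  have h0: "0 \<le> x^m - g^m" using Suc by simp
  have h1: "x^m - g^m \<le> real m * (x - g)" using Suc by simp
  have gm: "g^m \<le> 1" using assms by (simp add: power_le_one)
  have gm0: "0 \<le> g^m" using assms by simp
  have eq: "x^Suc m - g^Suc m = x * (x^m - g^m) + g^m * (x - g)" by (simp add: algebra_simps)
  have "x * (x^m - g^m) \<le> x^m - g^m" using mult_left_le_one_le[OF h0 _ assms(3)] assms by simp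
  moreover have "g^m * (x - g) \<le> x - g" using mult_right_mono[OF gm, of "x-g"] assms(2) by simp
  moreover have "0 \<le> x * (x^m - g^m)" using h0 assms by simp
  moreover have "0 \<le> g^m * (x - g)" using gm0 assms by simp
  moreover have r: "real (Suc m) * (x - g) = real m * (x-g) + (x-g)" by (simp add: algebra_simps)
  ultimately show ?case using eq h1 by linarith
qed

lemma curve_in_KK:
  fixes e :: "'d::finite \<Rightarrow> nat"
  assumes n: "0 < n" and x: "0 \<le> x" "x \<le> 1"
  shows "power_curve e x \<in> KK (convex hull (power_curve e ` {real i / real n | i. i \<le> n}))
                              (\<lambda>k. real (e k) / real n) UNIV"
proof -
  define i where "i = nat \<lfloor>x * real n\<rfloor>"
  define g where "g = real i / real n"
  have nn: "real n > 0" using n by simp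
  have fl0: "0 \<le> \<lfloor>x * real n\<rfloor>" using x nn by simp
  have ri: "real i = of_int \<lfloor>x * real n\<rfloor>" unfolding i_def using fl0 by (metis of_int_of_nat_eq nat_0_le)
  have h1: "real i \<le> x * real n" using ri by simp
  have h2: "x * real n < real i + 1" using ri floor_le_iff[of "x * real n" "\<lfloor>x * real n\<rfloor>"] by simp
  have h3: "x * real n \<le> real n" using x nn by simp
  have gx: "g \<le> x" unfolding g_def using h1 nn by (simp add: divide_le_eq)
  have "x * real n - real i \<le> 1" using h2 by linarith
  then have "(x * real n - real i) / real n \<le> 1 / real n" using nn by (simp add: divide_right_mono)
  moreover have "(x * real n - real i) / real n = x - g" unfolding g_def using nn by (simp add: field_simps)
  ultimately have xg: "x - g \<le> 1 / real n" by simp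
  have g0: "0 \<le> g" unfolding g_def by simp
  have "real i \<le> real n" using h1 h3 by linarith
  then have "i \<le> n" by simp
  then have gG: "g \<in> {real i / real n | i. i \<le> n}" unfolding g_def by blast
  define w :: "real^'d" where "w = (\<chi> k. x ^ e k - g ^ e k)"
  have "power_curve e x = power_curve e g + w"
    unfolding power_curve_def w_def by (simp add: vec_eq_iff)
  moreover have "power_curve e g \<in> convex hull (power_curve e ` {real i / real n | i. i \<le> n})"
    using gG by (intro hull_inc imageI)
  moreover have "w \<in> boxB (\<lambda>k. real (e k) / real n) UNIV"
    unfolding boxB_def
  proof (intro CollectI allI)
    fix k
    have d: "0 \<le> x ^ e k - g ^ e k \<and> x ^ e k - g ^ e k \<le> real (e k) * (x - g)"
      by (rule pow_diff_le[OF g0 gx x(2)])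
    have "real (e k) * (x - g) \<le> real (e k) * (1 / real n)" using xg by (intro mult_left_mono) auto
    then show "\<bar>w $ k\<bar> \<le> (if k \<in> UNIV then real (e k) / real n else 0)"
      using d unfolding w_def by simp
  qed
  ultimately show ?thesis unfolding KK_def by blast
qed

theorem proposition3p3:
  "\<exists>k::real. \<forall>(e :: 'd::{finite,linorder} \<Rightarrow> nat) (n::nat).
      strict_mono e \<and> (\<forall>i. 0 < e i) \<and> 0 < n \<longrightarrow>
      (let P = convex hull (power_curve e ` {real i / real n | i. i \<le> n});
           C = convex hull (power_curve e ` {0..1})
       in 0 \<le> measure lborel C - measure lborel P \<and>
          measure lborel C - measure lborel P \<le> k / real n * real (\<Sum>i\<in>UNIV. e i))"
proof -
  define mR where "mR = measure lebesgue (cbox (vec (-2)) (vec 3) :: (real^'d::{finite,linorder}) set)"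
  define U where "U = (cbox (vec 0) (vec 1) :: (real^'d::{finite,linorder}) set)"
  define mU where "mU = measure lebesgue U"
  have mR0: "0 \<le> mR" unfolding mR_def by (rule measure_nonneg)
  have mU0: "0 \<le> mU" unfolding mU_def by (rule measure_nonneg)
  show ?thesis
  proof (intro exI[of _ "4 * mR + mU"] allI impI)
    fix e :: "'d \<Rightarrow> nat" and n :: nat
    assume "strict_mono e \<and> (\<forall>i. 0 < e i) \<and> 0 < n"
    then have n: "0 < n" by blast
    define G where "G = {real i / real n | i. i \<le> n}"
    define P where "P = convex hull (power_curve e ` G)"
    define C where "C = convex hull (power_curve e ` {0..1})"
    have nn: "real n > 0" using n by simp
    have GI: "G \<subseteq> {0..1}"
    proof
      fix z assume "z \<in> G"
      then obtain i where i: "i \<le> n" and z: "z = real i / real n" unfolding G_def by blast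
      have "real i \<le> real n" using i by simp
      then show "z \<in> {0..1}" unfolding z using nn by simp
    qed
    have Gf: "finite G"
    proof -
      have "G = (\<lambda>i. real i / real n) ` {..n}" unfolding G_def by auto
      then show ?thesis by simp
    qed
    have img01: "power_curve e ` {0..1} \<subseteq> U"
    proof
      fix z assume "z \<in> power_curve e ` {0..1}"
      then obtain x where x: "0 \<le> x" "x \<le> 1" and z: "z = power_curve e x" by auto
      show "z \<in> U" unfolding U_def z power_curve_def mem_box_cart
        using x by (simp add: power_le_one)
    qed
    have cont: "continuous_on {0..1} (power_curve e)"
      unfolding power_curve_def by (intro continuous_on_vec_lambda continuous_intros)
    have Cc: "compact C" unfolding C_def
      by (intro compact_convex_hull compact_continuous_image cont compact_Icc)
    have Pc: "compact P" unfolding P_def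
      by (intro finite_imp_compact_convex_hull finite_imageI Gf)
    have Pv: "convex P" unfolding P_def by (rule convex_convex_hull)
    have PC: "P \<subseteq> C" unfolding P_def C_def using GI by (intro hull_mono image_mono)
    have CU: "C \<subseteq> U" unfolding C_def using img01
      by (intro hull_minimal) (auto simp: U_def convex_box)
    have PU: "P \<subseteq> cbox (vec 0) (vec 1)" using PC CU unfolding U_def by blast
    have mC: "measure lborel C = measure lebesgue C"
      by (rule measure_completion[symmetric]) (simp add: borel_compact Cc)
    have mP: "measure lborel P = measure lebesgue P"
      by (rule measure_completion[symmetric]) (simp add: borel_compact Pc)
    have Cm: "C \<in> lmeasurable" by (rule lmeasurable_compact[OF Cc])
    have Pm: "P \<in> lmeasurable" by (rule lmeasurable_compact[OF Pc])
    have Um: "U \<in> lmeasurable" unfolding U_def by (rule lmeasurable_cbox)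
    have low: "measure lebesgue P \<le> measure lebesgue C"
      by (rule measure_mono_fmeasurable[OF PC fmeasurableD[OF Pm] Cm])
    have CmU: "measure lebesgue C \<le> mU" unfolding mU_def
      by (rule measure_mono_fmeasurable[OF CU fmeasurableD[OF Cm] Um])
    define E where "E = real (\<Sum>i\<in>UNIV. e i)"
    have Esum: "E = (\<Sum>i\<in>UNIV. real (e i))" unfolding E_def by simp
    define a where "a = (\<lambda>k. real (e k) / real n)"
    have sa: "(\<Sum>j\<in>UNIV. a j) = E / real n" unfolding a_def Esum by (simp add: sum_divide_distrib)
    have E0: "0 \<le> E / real n" unfolding E_def using nn by (intro divide_nonneg_nonneg) (auto intro: sum_nonneg)
    have up: "measure lebesgue C - measure lebesgue P \<le> (4 * mR + mU) * (E / real n)"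
    proof (cases "\<forall>i. a i \<le> 1")
      case True
      have a01: "\<forall>i. 0 \<le> a i \<and> a i \<le> 1" using True nn unfolding a_def by simp
      have CK: "C \<subseteq> KK P a UNIV"
        unfolding C_def
      proof (rule hull_minimal)
        show "power_curve e ` {0..1} \<subseteq> KK P a UNIV"
          using curve_in_KK[OF n] unfolding P_def G_def a_def by auto
        show "convex (KK P a UNIV)" using KK_convex[OF Pv] a01 by blast
      qed
      have Kc: "compact (KK P a UNIV)" using KK_compact[OF Pc] a01 by blast
      have "measure lebesgue C \<le> measure lebesgue (KK P a UNIV)"
        by (rule measure_mono_fmeasurable[OF CK fmeasurableD[OF Cm] lmeasurable_compact[OF Kc]])
      also have "\<dots> \<le> measure lebesgue P + 4 * mR * (\<Sum>j\<in>UNIV. a j)"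
        unfolding mR_def by (rule KK_ind[OF Pv Pc PU a01 finite])
      finally have "measure lebesgue C - measure lebesgue P \<le> 4 * mR * (E / real n)"
        using sa by simp
      moreover have "0 \<le> mU * (E / real n)" using mU0 E0 by (rule mult_nonneg_nonneg)
      ultimately show ?thesis by (simp add: algebra_simps)
    next
      case False
      then obtain i where ai: "a i > 1" by (auto simp: not_le)
      have "real (e i) \<le> E" unfolding Esum by (rule member_le_sum) auto
      then have "a i \<le> E / real n" unfolding a_def using nn by (simp add: divide_right_mono)
      then have E1: "1 \<le> E / real n" using ai by simp
      have "measure lebesgue C - measure lebesgue P \<le> mU"
        using CmU measure_nonneg[of lebesgue P] by linarith
      also have "\<dots> \<le> mU * (E / real n)" using mult_left_mono[OF E1 mU0] by (simp only: mult_1_right)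
      also have "\<dots> \<le> (4 * mR + mU) * (E / real n)" using mR0 E0 by (intro mult_right_mono) auto
      finally show ?thesis .
    qed
    show "let P = convex hull (power_curve e ` {real i / real n | i. i \<le> n});
           C = convex hull (power_curve e ` {0..1})
       in 0 \<le> measure lborel C - measure lborel P \<and>
          measure lborel C - measure lborel P \<le> (4 * mR + mU) / real n * real (\<Sum>i\<in>UNIV. e i)"
      unfolding Let_def P_def[symmetric] G_def[symmetric] C_def[symmetric] mC mP E_def[symmetric]
      using low up by (simp add: field_simps)
  qed
qed
end
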